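(* Let $J\ge2$ and let $X$ come from the $J$-state HMM of the context with $\mu$ Lebesgue measure and parameters satisfying Assumptions A2', A3 and A4. Then there exist functions $(h_l)_{l\in\mathbb N}$, not depending on $H$, with $\sup_l\|h_l\|_\infty<\infty$, such that the matrix $O^{L_0}=(E[h_l(X_1)\mid\theta_1=j])_{l\le L_0,j\le J}\in\mathbb R^{L_0\times J}$ satisfies $$\sigma_J(O^{L_0})\ge C\quad\text{for all }L_0\ge\underline L,$$ for some $C>0$ and $\underline L\in\mathbb N$ depending on $f_1,\dots,f_J$.
   Context: $J$-state HMM: $\theta=(\theta_n)$ is a Markov chain on $\{1,\dots,J\}$ with transition matrix $Q$ and initial distribution $\pi$; given $\theta$, the $X_n$ are independent with Lebesgue densities $f_{\theta_n}$. $\sigma_J(A)$ denotes the $J$-th largest singular value of a matrix $A$. Assumption A2': $Q$ has full rank, the chain is irreducible and aperiodic, and $\theta_1$ follows the invariant distribution. Assumption A3: $f_1,\dots,f_J$ are linearly independent. Assumption A4: $f_1,\dots,f_J\in C^s(\mathbb R)$ for some $s>0$ (usual locally Hölder space: bounded continuous with $\sup_{0<|x-y|\le1}|f(x)-f(y)|/|x-y|^s<\infty$ for $s<1$, and $f^{(\lfloor s\rfloor)}\in C^{s-\lfloor s\rfloor}$ for $s\ge1$). *)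

theory Defs
  imports "HOL-Analysis.Analysis" "Jordan_Normal_Form.Char_Poly"
    "HOL-Computational_Algebra.Polynomial" "HOL-Library.Multiset"
begin

text \<open>The singular values of a real matrix A (with n columns) are the square roots of
  the n eigenvalues (counted with algebraic multiplicity) of the symmetric positive
  semidefinite matrix A^T A, i.e. of the roots of its characteristic polynomial.
  sigma_k A is the k-th largest one (k = 1,...,n).\<close>

definition singular_values_desc :: "real mat \<Rightarrow> real list" where
  "singular_values_desc A =
     map sqrt (rev (sorted_list_of_multiset (proots (char_poly (transpose_mat A * A)))))"

definition sigma_sv :: "nat \<Rightarrow> real mat \<Rightarrow> real" where
  "sigma_sv k A = singular_values_desc A ! (k - 1)"

definition holder_seminorm_finite :: "real \<Rightarrow> (real \<Rightarrow> real) \<Rightarrow> bool" where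
  "holder_seminorm_finite a g \<longleftrightarrow>
     (\<exists>M. \<forall>x y. 0 < \<bar>x - y\<bar> \<and> \<bar>x - y\<bar> \<le> 1 \<longrightarrow> \<bar>g x - g y\<bar> / \<bar>x - y\<bar> powr a \<le> M)"

definition bounded_cont :: "(real \<Rightarrow> real) \<Rightarrow> bool" where
  "bounded_cont g \<longleftrightarrow> continuous_on UNIV g \<and> (\<exists>M. \<forall>x. \<bar>g x\<bar> \<le> M)"

definition holder_space :: "real \<Rightarrow> (real \<Rightarrow> real) \<Rightarrow> bool" where
  "holder_space s f \<longleftrightarrow>
     (\<forall>k \<le> nat \<lfloor>s\<rfloor>. bounded_cont ((deriv ^^ k) f)) \<and>
     (\<forall>k < nat \<lfloor>s\<rfloor>. \<forall>x. (deriv ^^ k) f differentiable at x) \<and>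
     holder_seminorm_finite (s - of_int \<lfloor>s\<rfloor>) ((deriv ^^ nat \<lfloor>s\<rfloor>) f)"

text \<open>States are indexed 0..<J. Q is a J x J transition matrix, p a distribution.\<close>

definition stochastic_matrix :: "nat \<Rightarrow> real mat \<Rightarrow> bool" where
  "stochastic_matrix J Q \<longleftrightarrow> Q \<in> carrier_mat J J \<and>
     (\<forall>i<J. \<forall>j<J. Q $$ (i,j) \<ge> 0) \<and> (\<forall>i<J. (\<Sum>j<J. Q $$ (i,j)) = 1)"

definition prob_vector :: "nat \<Rightarrow> (nat \<Rightarrow> real) \<Rightarrow> bool" where
  "prob_vector J p \<longleftrightarrow> (\<forall>j<J. p j \<ge> 0) \<and> (\<Sum>j<J. p j) = 1"

definition irreducible_chain :: "nat \<Rightarrow> real mat \<Rightarrow> bool" where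
  "irreducible_chain J Q \<longleftrightarrow> (\<forall>i<J. \<forall>j<J. \<exists>n>0. (Q ^\<^sub>m n) $$ (i,j) > 0)"

definition aperiodic_chain :: "nat \<Rightarrow> real mat \<Rightarrow> bool" where
  "aperiodic_chain J Q \<longleftrightarrow> (\<forall>i<J. Gcd {n::nat. n > 0 \<and> (Q ^\<^sub>m n) $$ (i,i) > 0} = 1)"

definition invariant_distribution :: "nat \<Rightarrow> real mat \<Rightarrow> (nat \<Rightarrow> real) \<Rightarrow> bool" where
  "invariant_distribution J Q p \<longleftrightarrow> prob_vector J p \<and>
     (\<forall>j<J. (\<Sum>i<J. p i * Q $$ (i,j)) = p j)"

definition assumption_A2' :: "nat \<Rightarrow> real mat \<Rightarrow> (nat \<Rightarrow> real) \<Rightarrow> bool" where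
  "assumption_A2' J Q p \<longleftrightarrow> stochastic_matrix J Q \<and> Determinant.det Q \<noteq> 0 \<and>
     irreducible_chain J Q \<and> aperiodic_chain J Q \<and> invariant_distribution J Q p"

definition lebesgue_densities :: "nat \<Rightarrow> (nat \<Rightarrow> real \<Rightarrow> real) \<Rightarrow> bool" where
  "lebesgue_densities J f \<longleftrightarrow> (\<forall>j<J. f j \<in> borel_measurable lborel \<and> (\<forall>x. f j x \<ge> 0) \<and>
     integrable lborel (f j) \<and> (\<integral>x. f j x \<partial>lborel) = 1)"

definition assumption_A3 :: "nat \<Rightarrow> (nat \<Rightarrow> real \<Rightarrow> real) \<Rightarrow> bool" where
  "assumption_A3 J f \<longleftrightarrow>
     (\<forall>c::nat \<Rightarrow> real. (\<forall>x. (\<Sum>j<J. c j * f j x) = 0) \<longrightarrow> (\<forall>j<J. c j = 0))"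

definition assumption_A4 :: "nat \<Rightarrow> (nat \<Rightarrow> real \<Rightarrow> real) \<Rightarrow> bool" where
  "assumption_A4 J f \<longleftrightarrow> (\<exists>s>0. \<forall>j<J. holder_space s (f j))"

text \<open>E[h(X_1) | theta_1 = j]: X_1 given theta_1 = j has Lebesgue density f_j.\<close>
definition cond_exp_emission :: "(nat \<Rightarrow> real \<Rightarrow> real) \<Rightarrow> (real \<Rightarrow> real) \<Rightarrow> nat \<Rightarrow> real" where
  "cond_exp_emission f h j = (\<integral>x. h x * f j x \<partial>lborel)"

text \<open>O^{L0} = (E[h_l(X_1) | theta_1 = j])_{l <= L0, j <= J}, rows l = 1..L0 stored at 0..<L0.\<close>
definition O_mat :: "(nat \<Rightarrow> real \<Rightarrow> real) \<Rightarrow> (nat \<Rightarrow> real \<Rightarrow> real) \<Rightarrow> nat \<Rightarrow> nat \<Rightarrow> real mat" where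
  "O_mat f h J L0 = mat L0 J (\<lambda>(l,j). cond_exp_emission f (h (l+1)) j)"

end

theory Submission
  imports Defs
begin


lemma det_select:
  fixes H :: "nat \<Rightarrow> nat \<Rightarrow> real"
  assumes "\<And>c. (\<forall>l. (\<Sum>j<n. c j * H l j) = 0) \<Longrightarrow> (\<forall>j<n. c j = 0)"
  shows "\<exists>ls. det (mat n n (\<lambda>(i,j). H (ls i) j)) \<noteq> 0"
  using assms
proof (induction n)
  case 0
  then show ?case by (auto simp: det_def)
next
  case (Suc n)
  have "\<forall>j<n. c j = 0" if "\<forall>l. (\<Sum>j<n. c j * H l j) = 0" for c
  proof -
    have "\<forall>l. (\<Sum>j<Suc n. (c(n:=0)) j * H l j) = 0" using that by simp
    then have "\<forall>j<Suc n. (c(n:=0)) j = 0" using Suc.prems by blast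
    then show ?thesis by (metis fun_upd_other less_SucI less_irrefl)
  qed
  then obtain ls where ls: "det (mat n n (\<lambda>(i,j). H (ls i) j)) \<noteq> 0" using Suc.IH by blast
  define M where "M l = mat (Suc n) (Suc n) (\<lambda>(i,j). H ((ls(n:=l)) i) j)" for l
  define c where "c j = cofactor (M 0) n j" for j
  have cof: "cofactor (M l) n j = c j" for l j
    unfolding c_def cofactor_def mat_delete_def M_def
    by (intro arg_cong[where f="\<lambda>x. _ * det x"] eq_matI) auto
  have cn: "c n \<noteq> 0"
  proof -
    have "mat_delete (M 0) n n = mat n n (\<lambda>(i,j). H (ls i) j)"
      unfolding mat_delete_def M_def by (intro eq_matI) auto
    then show ?thesis using ls unfolding c_def cofactor_def by simp
  qed
  have detM: "det (M l) = (\<Sum>j<Suc n. H l j * c j)" for l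
  proof -
    have "det (M l) = (\<Sum>j<Suc n. M l $$ (n,j) * cofactor (M l) n j)"
      by (rule laplace_expansion_row) (auto simp: M_def)
    also have "\<dots> = (\<Sum>j<Suc n. H l j * c j)"
      by (intro sum.cong refl) (simp add: cof, simp add: M_def)
    finally show ?thesis .
  qed
  obtain l where "det (M l) \<noteq> 0"
  proof -
    have "\<not> (\<forall>l. (\<Sum>j<Suc n. c j * H l j) = 0)" using Suc.prems[of c] cn by blast
    then show ?thesis using that detM by (auto simp: mult.commute)
  qed
  then show ?case unfolding M_def by blast
qed



lemma eig_bound:
  fixes A T :: "real mat" and v :: "complex vec" and z :: complex
  assumes A: "A \<in> carrier_mat L J" and T: "T \<in> carrier_mat J J"
    and ls: "\<forall>i<J. ls i < L"
    and TS: "T * mat J J (\<lambda>(i,j). A $$ (ls i, j)) = 1\<^sub>m J"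
    and ev: "eigenvector (map_mat complex_of_real (transpose_mat A * A)) v z"
  shows "z = of_real (Re z) \<and> Re z \<ge> 1 / (real J * ((\<Sum>j<J. \<Sum>i<J. (T $$ (j,i))\<^sup>2) + 1))"
proof -
  define K where "K = (\<Sum>j<J. \<Sum>i<J. (T $$ (j,i))\<^sup>2)"
  define Ac where "Ac k m = complex_of_real (A $$ (k,m))" for k m
  define w where "w k = (\<Sum>m<J. Ac k m * vec_index v m)" for k
  have v: "v \<in> carrier_vec J" and v0: "v \<noteq> 0\<^sub>v J"
    and Mv: "map_mat complex_of_real (transpose_mat A * A) *\<^sub>v v = z \<cdot>\<^sub>v v"
    using ev A unfolding eigenvector_def by auto
  have E1: "z * vec_index v j = (\<Sum>k<L. Ac k j * w k)" if j: "j < J" for j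
  proof -
    have "z * vec_index v j = (map_mat complex_of_real (transpose_mat A * A) *\<^sub>v v) $ j"
      using Mv v j by simp
    also have "\<dots> = (\<Sum>m<J. complex_of_real (\<Sum>k<L. A $$ (k,j) * A $$ (k,m)) * vec_index v m)"
      using A v j by (auto simp: scalar_prod_def lessThan_atLeast0 intro!: sum.cong)
    also have "\<dots> = (\<Sum>m<J. \<Sum>k<L. Ac k j * (Ac k m * vec_index v m))"
      by (simp add: Ac_def sum_distrib_right mult.assoc)
    also have "\<dots> = (\<Sum>k<L. Ac k j * w k)"
      by (subst sum.swap) (simp add: w_def sum_distrib_left)
    finally show ?thesis .
  qed
  define N where "N = (\<Sum>j<J. (cmod (vec_index v j))\<^sup>2)"
  define W where "W = (\<Sum>k<L. (cmod (w k))\<^sup>2)"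
  have zN: "z * of_real N = of_real W"
  proof -
    have "z * of_real N = (\<Sum>j<J. cnj (vec_index v j) * (z * vec_index v j))"
      by (simp add: N_def sum_distrib_left complex_norm_square mult_ac del: of_real_power)
    also have "\<dots> = (\<Sum>j<J. \<Sum>k<L. cnj (vec_index v j) * Ac k j * w k)"
      by (intro sum.cong refl) (simp add: E1 sum_distrib_left mult.assoc)
    also have "\<dots> = (\<Sum>k<L. w k * cnj (w k))"
      by (subst sum.swap) (simp add: w_def cnj_sum sum_distrib_left sum_distrib_right Ac_def mult_ac)
    also have "\<dots> = of_real W"
      by (simp add: W_def complex_norm_square del: of_real_power)
    finally show ?thesis .
  qed
  define S where "S = mat J J (\<lambda>(i,j). A $$ (ls i, j))"
  have vj: "vec_index v j = (\<Sum>i<J. of_real (T $$ (j,i)) * w (ls i))" if j: "j < J" for j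
  proof -
    have TSjm: "(\<Sum>i<J. T $$ (j,i) * A $$ (ls i, m)) = (if j = m then 1 else 0)" if m: "m < J" for m
    proof -
      have "(T * S) $$ (j,m) = (\<Sum>i<J. T $$ (j,i) * A $$ (ls i, m))"
        using T j m by (auto simp: S_def scalar_prod_def lessThan_atLeast0 intro!: sum.cong)
      then show ?thesis using TS j m by (simp add: S_def)
    qed
    have "(\<Sum>i<J. of_real (T $$ (j,i)) * w (ls i)) = (\<Sum>i<J. \<Sum>m<J. of_real (T $$ (j,i)) * (Ac (ls i) m * vec_index v m))"
      by (simp add: w_def sum_distrib_left)
    also have "\<dots> = (\<Sum>m<J. \<Sum>i<J. of_real (T $$ (j,i)) * of_real (A $$ (ls i, m)) * vec_index v m)"
      by (subst sum.swap) (simp add: Ac_def mult.assoc)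
    also have "\<dots> = (\<Sum>m<J. of_real (\<Sum>i<J. T $$ (j,i) * A $$ (ls i, m)) * vec_index v m)"
      by (simp add: sum_distrib_right)
    also have "\<dots> = (\<Sum>m<J. (if j = m then vec_index v m else 0))"
      by (intro sum.cong refl) (simp add: TSjm)
    also have "\<dots> = vec_index v j" using j by simp
    finally show ?thesis by simp
  qed
  have bj: "(cmod (vec_index v j))\<^sup>2 \<le> (\<Sum>i<J. (T $$ (j,i))\<^sup>2) * (\<Sum>i<J. (cmod (w (ls i)))\<^sup>2)" if j: "j < J" for j
  proof -
    have "cmod (vec_index v j) \<le> (\<Sum>i<J. \<bar>T $$ (j,i)\<bar> * cmod (w (ls i)))"
      unfolding vj[OF j] by (rule order_trans[OF norm_sum]) (simp add: norm_mult)
    then have "(cmod (vec_index v j))\<^sup>2 \<le> (\<Sum>i<J. \<bar>T $$ (j,i)\<bar> * cmod (w (ls i)))\<^sup>2"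
      by (simp add: power_mono)
    also have "\<dots> \<le> (\<Sum>i<J. \<bar>T $$ (j,i)\<bar>\<^sup>2) * (\<Sum>i<J. (cmod (w (ls i)))\<^sup>2)"
      by (rule Cauchy_Schwarz_ineq_sum)
    finally show ?thesis by simp
  qed
  have W0: "W \<ge> 0" unfolding W_def by (simp add: sum_nonneg)
  have sls: "(\<Sum>i<J. (cmod (w (ls i)))\<^sup>2) \<le> real J * W"
  proof -
    have "(\<Sum>i<J. (cmod (w (ls i)))\<^sup>2) \<le> (\<Sum>i<J. W)"
    proof (rule sum_mono)
      fix i assume "i \<in> {..<J}"
      then have "ls i \<in> {..<L}" using ls by auto
      then show "(cmod (w (ls i)))\<^sup>2 \<le> W" unfolding W_def
        by (rule member_le_sum[where f="\<lambda>k. (cmod (w k))\<^sup>2"]) auto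
    qed
    then show ?thesis by simp
  qed
  have K0: "K \<ge> 0" unfolding K_def by (simp add: sum_nonneg)
  have NK: "N \<le> K * (real J * W)"
  proof -
    have "N \<le> (\<Sum>j<J. (\<Sum>i<J. (T $$ (j,i))\<^sup>2) * (real J * W))"
      unfolding N_def
    proof (rule sum_mono)
      fix j assume j: "j \<in> {..<J}"
      have "0 \<le> (\<Sum>i<J. (T $$ (j,i))\<^sup>2)" by (simp add: sum_nonneg)
      then show "(cmod (vec_index v j))\<^sup>2 \<le> (\<Sum>i<J. (T $$ (j,i))\<^sup>2) * (real J * W)"
        using bj[of j] j sls by (meson lessThan_iff mult_left_mono order_trans)
    qed
    then show ?thesis by (simp add: K_def sum_distrib_right)
  qed
  have Npos: "N > 0"
  proof -
    obtain j where j: "j < J" "vec_index v j \<noteq> 0" using v v0 by (metis eq_vecI carrier_vecD index_zero_vec)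
    have "(cmod (vec_index v j))\<^sup>2 \<le> N" unfolding N_def
      by (rule member_le_sum[where f="\<lambda>k. (cmod (vec_index v k))\<^sup>2"]) (use j in auto)
    moreover have "(cmod (vec_index v j))\<^sup>2 > 0" using j by simp
    ultimately show ?thesis by linarith
  qed
  have zW: "z = of_real (W / N)"
  proof -
    have "of_real N \<noteq> (0::complex)" using Npos by simp
    then have "z = of_real W / of_real N" using zN by (simp add: eq_divide_eq)
    then show ?thesis by simp
  qed
  have JW: "0 \<le> real J * W" using W0 by simp
  have NK1: "N \<le> (K + 1) * (real J * W)" using NK JW by (simp add: distrib_right)
  have Jpos: "J > 0"
  proof (rule ccontr)
    assume "\<not> J > 0" then have "J = 0" by simp
    then show False using Npos by (simp add: N_def)
  qed
  define D where "D = real J * (K + 1)"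
  have D: "D > 0" using Jpos K0 by (simp add: D_def)
  have "N / D \<le> W" using NK1 D by (simp add: pos_divide_le_eq D_def mult_ac)
  then have "1 / D \<le> W / N" using Npos by (simp add: le_divide_eq)
  then have "1 / (real J * (K + 1)) \<le> W / N" by (simp add: D_def)
  then show ?thesis using zW by (simp add: K_def)
qed



lemma proots_linear_prod: "proots (\<Prod>r\<leftarrow>rs. [:- r, 1:]) = mset (rs :: real list)"
proof (induction rs)
  case Nil then show ?case by simp
next
  case (Cons r rs)
  have ne: "(\<Prod>r\<leftarrow>rs. [:- r, 1:]) \<noteq> (0 :: real poly)"
    by (auto simp: prod_list_zero_iff)
  have "proots (\<Prod>r\<leftarrow>r # rs. [:- r, 1:]) = proots [:- r, 1:] + proots (\<Prod>r\<leftarrow>rs. [:- r, 1:])"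
    unfolding list.map prod_list.Cons by (rule proots_mult) (use ne in auto)
  also have "\<dots> = {#r#} + mset rs" using Cons.IH by (metis minus_minus proots_linear_factor)
  finally show ?case by simp
qed

lemma sv_ge:
  fixes A :: "real mat"
  assumes A: "A \<in> carrier_mat L J" and J: "J > 0"
    and ev: "\<And>z. eigenvalue (map_mat complex_of_real (transpose_mat A * A)) z \<Longrightarrow> z = of_real (Re z) \<and> Re z \<ge> b"
  shows "sigma_sv J A \<ge> sqrt b"
proof -
  interpret pc: map_poly_inj_comm_ring_hom "of_real :: real \<Rightarrow> complex" ..
  define M where "M = transpose_mat A * A"
  have M: "M \<in> carrier_mat J J" using A by (simp add: M_def)
  define Mc where "Mc = map_mat complex_of_real M"
  have Mc: "Mc \<in> carrier_mat J J" using M by (simp add: Mc_def)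
  obtain as where as: "char_poly Mc = (\<Prod>a\<leftarrow>as. [:- a, 1:])" and las: "length as = J"
    using char_poly_factorized[OF Mc] by blast
  have asr: "a = of_real (Re a) \<and> Re a \<ge> b" if a: "a \<in> set as" for a
  proof -
    have "poly (char_poly Mc) a = 0" unfolding as using a by (rule linear_poly_root)
    then have "eigenvalue Mc a" using eigenvalue_root_char_poly[OF Mc] by simp
    then show ?thesis using ev unfolding Mc_def M_def by blast
  qed
  define rs where "rs = map Re as"
  have "map_poly of_real (\<Prod>r\<leftarrow>rs. [:- r, 1:]) = (\<Prod>r\<leftarrow>rs. [:- complex_of_real r, 1:])"
    by (simp add: pc.hom_prod_list o_def)
  also have "\<dots> = (\<Prod>a\<leftarrow>as. [:- a, 1:])"
  proof -
    have eq: "map (\<lambda>a. [:- complex_of_real (Re a), 1:]) as = map (\<lambda>a. [:- a, 1:]) as"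
      by (rule map_cong[OF refl]) (metis asr)
    show ?thesis unfolding rs_def map_map o_def eq by (rule refl)
  qed
  also have "\<dots> = map_poly of_real (char_poly M)"
  proof -
    have "char_poly (map_mat (of_real::real\<Rightarrow>complex) M) = map_poly of_real (char_poly M)"
      by (rule of_real_hom.char_poly_hom[OF M])
    then show ?thesis using as unfolding Mc_def by simp
  qed
  finally have cp: "char_poly M = (\<Prod>r\<leftarrow>rs. [:- r, 1:])" by (simp add: pc.eq_iff)
  define xs where "xs = sorted_list_of_multiset (mset rs)"
  have mxs: "mset xs = mset rs" by (simp add: xs_def)
  have lxs: "length xs = J" using mxs las rs_def by (metis length_map size_mset)
  have sxs: "set xs = set rs" using mxs by (metis set_mset_mset)
  have "sigma_sv J A = sqrt (rev xs ! (J - 1))"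
    unfolding sigma_sv_def singular_values_desc_def
    using cp lxs J by (simp add: M_def proots_linear_prod xs_def)
  moreover have "rev xs ! (J - 1) \<in> set rs"
    using lxs J sxs by (metis diff_less less_one nth_mem set_rev length_rev)
  then have "rev xs ! (J - 1) \<ge> b" using asr unfolding rs_def by auto
  ultimately show ?thesis by simp
qed



definition Iv :: "nat \<Rightarrow> real set" where
  "Iv k = {real_of_rat (fst (from_nat k :: rat \<times> rat)) .. real_of_rat (snd (from_nat k :: rat \<times> rat))}"

lemma Iv_borel[measurable]: "Iv k \<in> sets borel"
  unfolding Iv_def by simp

lemma integrable_Iv: "integrable lborel (g :: real \<Rightarrow> real) \<Longrightarrow> integrable lborel (\<lambda>x. indicator (Iv k) x * g x)"
  using integrable_mult_indicator[of "Iv k" lborel g] by simp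
lemma pos_case:
  fixes g :: "real \<Rightarrow> real"
  assumes g: "integrable lborel g" "continuous_on UNIV g" and x0: "g x0 > 0"
  shows "\<exists>k. (\<integral>x. indicator (Iv k) x * g x \<partial>lborel) > 0"
proof -
  define e where "e = g x0"
  have "isCont g x0" using g(2) by (simp add: continuous_on_eq_continuous_at)
  then obtain d where d: "d > 0" and dg: "\<And>x. dist x x0 < d \<Longrightarrow> dist (g x) (g x0) < e / 2"
    using x0 unfolding continuous_at_eps_delta e_def by (metis half_gt_zero)
  obtain a where a: "a \<in> \<rat>" "x0 - d < a" "a < x0" using Rats_dense_in_real[of "x0 - d" x0] d by auto
  obtain b where b: "b \<in> \<rat>" "x0 < b" "b < x0 + d" using Rats_dense_in_real[of x0 "x0 + d"] d by auto
  obtain qa where qa: "a = of_rat qa" using a(1) Rats_cases by blast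
  obtain qb where qb: "b = of_rat qb" using b(1) Rats_cases by blast
  define k where "k = to_nat (qa, qb)"
  have Ik: "Iv k = {a..b}" unfolding Iv_def k_def by (simp add: qa qb)
  have ge: "indicator {a..b} x * (e / 2) \<le> indicator {a..b} x * g x" for x
  proof (cases "x \<in> {a..b}")
    case True
    then have "dist x x0 < d" using a b by (auto simp: dist_real_def)
    then have "dist (g x) (g x0) < e / 2" by (rule dg)
    then have "\<bar>g x - e\<bar> < e / 2" by (simp add: dist_real_def e_def)
    then have "g x > e / 2" by linarith
    then show ?thesis using True by simp
  qed simp
  have int1: "integrable lborel (\<lambda>x. indicator {a..b} x * (e / 2) :: real)"
    using a b by (intro integrable_mult_left integrable_real_indicator) auto
  have "(\<integral>x. indicator {a..b} x * (e / 2) \<partial>lborel) = (b - a) * (e / 2)"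
    using a b by simp
  also have "\<dots> > 0" using a b x0 by (simp add: e_def)
  finally have "0 < (\<integral>x. indicator {a..b} x * (e / 2) \<partial>lborel)" .
  also have "\<dots> \<le> (\<integral>x. indicator {a..b} x * g x \<partial>lborel)"
    by (rule integral_mono[OF int1 integrable_Iv[OF g(1), of k, unfolded Ik] ge])
  finally show ?thesis using Ik by metis
qed

lemma sep_interval:
  fixes g :: "real \<Rightarrow> real"
  assumes g: "integrable lborel g" "continuous_on UNIV g"
    and z: "\<And>k. (\<integral>x. indicator (Iv k) x * g x \<partial>lborel) = 0"
  shows "g x = 0"
proof (rule ccontr)
  assume "g x \<noteq> 0"
  then consider "g x > 0" | "(\<lambda>x. - g x) x > 0" by fastforce
  then show False
  proof cases
    case 1 then show False using pos_case[OF g] z by (metis less_irrefl)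
  next
    case 2
    have "integrable lborel (\<lambda>x. - g x)" "continuous_on UNIV (\<lambda>x. - g x)"
      using g by (auto intro: continuous_intros)
    from pos_case[OF this 2] obtain k where "(\<integral>y. indicator (Iv k) y * - g y \<partial>lborel) > 0" by blast
    then show False using z[of k] by simp
  qed
qed


theorem lemma23:
  shows "\<exists>h :: nat \<Rightarrow> real \<Rightarrow> real.
     (\<forall>l. h l \<in> borel_measurable borel) \<and>
     (\<exists>B. \<forall>l x. \<bar>h l x\<bar> \<le> B) \<and>
     (\<forall>(J::nat) (Q::real mat) (p::nat \<Rightarrow> real) (f::nat \<Rightarrow> real \<Rightarrow> real).
        J \<ge> 2 \<and> lebesgue_densities J f \<and> assumption_A2' J Q p \<and>
        assumption_A3 J f \<and> assumption_A4 J f \<longrightarrow>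
        (\<exists>C>0. \<exists>Lbar::nat. \<forall>L0 \<ge> Lbar. sigma_sv J (O_mat f h J L0) \<ge> C))"
proof -
  define h where "h l = (indicator (Iv (l - 1)) :: real \<Rightarrow> real)" for l
  have hm: "\<forall>l. h l \<in> borel_measurable borel" by (simp add: h_def)
  have hb: "\<exists>B. \<forall>l x. \<bar>h l x\<bar> \<le> B" by (rule exI[of _ 1]) (simp add: h_def indicator_def)
  have main: "\<forall>(J::nat) (Q::real mat) (p::nat \<Rightarrow> real) (f::nat \<Rightarrow> real \<Rightarrow> real).
        J \<ge> 2 \<and> lebesgue_densities J f \<and> assumption_A2' J Q p \<and>
        assumption_A3 J f \<and> assumption_A4 J f \<longrightarrow>
        (\<exists>C>0. \<exists>Lbar::nat. \<forall>L0 \<ge> Lbar. sigma_sv J (O_mat f h J L0) \<ge> C)"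
  proof (intro allI impI)
    fix J :: nat and Q :: "real mat" and p :: "nat \<Rightarrow> real" and f :: "nat \<Rightarrow> real \<Rightarrow> real"
    assume HH: "J \<ge> 2 \<and> lebesgue_densities J f \<and> assumption_A2' J Q p \<and>
        assumption_A3 J f \<and> assumption_A4 J f"
    then have J2: "J \<ge> 2" and dens: "lebesgue_densities J f" and A3: "assumption_A3 J f"
      and A4: "assumption_A4 J f" by auto
    have intf: "integrable lborel (f j)" if "j < J" for j
      using dens that unfolding lebesgue_densities_def by auto
    have contf: "continuous_on UNIV (f j)" if j: "j < J" for j
    proof -
      obtain s where "s > 0" "\<forall>j<J. holder_space s (f j)" using A4 unfolding assumption_A4_def by blast
      then have "bounded_cont ((deriv ^^ 0) (f j))" using j unfolding holder_space_def by blast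
      then show ?thesis by (simp add: bounded_cont_def)
    qed
    define Hm where "Hm l j = cond_exp_emission f (h (l+1)) j" for l j
    have Hm_eq: "Hm l j = (\<integral>x. indicator (Iv l) x * f j x \<partial>lborel)" for l j
      by (simp add: Hm_def cond_exp_emission_def h_def)
    have sep: "\<forall>j<J. c j = 0" if c: "\<forall>l. (\<Sum>j<J. c j * Hm l j) = 0" for c
    proof -
      define g where "g x = (\<Sum>j<J. c j * f j x)" for x
      have gi: "integrable lborel g" unfolding g_def
        by (auto intro!: integrable_sum integrable_mult_right intf)
      have gc: "continuous_on UNIV g" unfolding g_def
        by (intro continuous_on_sum continuous_on_mult continuous_on_const) (auto intro: contf)
      have gz: "(\<integral>x. indicator (Iv l) x * g x \<partial>lborel) = 0" for l
      proof -
        have "(\<integral>x. indicator (Iv l) x * g x \<partial>lborel) = (\<integral>x. (\<Sum>j<J. c j * (indicator (Iv l) x * f j x)) \<partial>lborel)"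
          unfolding g_def by (simp add: sum_distrib_left mult_ac)
        also have "\<dots> = (\<Sum>j<J. (\<integral>x. c j * (indicator (Iv l) x * f j x) \<partial>lborel))"
          by (rule Bochner_Integration.integral_sum[where f="\<lambda>j x. c j * (indicator (Iv l) x * f j x)"])
            (auto intro!: integrable_mult_right integrable_Iv intf)
        also have "\<dots> = (\<Sum>j<J. c j * Hm l j)"
          by (simp add: Hm_eq)
        finally show ?thesis using c by simp
      qed
      have "\<forall>x. g x = 0" using sep_interval[OF gi gc gz] by blast
      then show ?thesis using A3 unfolding assumption_A3_def g_def by blast
    qed
    obtain ls where dS: "det (mat J J (\<lambda>(i,j). Hm (ls i) j)) \<noteq> 0"
      using det_select[where n=J and H=Hm] sep by blast
    define S where "S = mat J J (\<lambda>(i,j). Hm (ls i) j)"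
    have Sc: "S \<in> carrier_mat J J" by (simp add: S_def)
    define T where "T = (1 / det S) \<cdot>\<^sub>m adj_mat S"
    have Tc: "T \<in> carrier_mat J J" using adj_mat(1)[OF Sc] by (simp add: T_def)
    have TS: "T * S = 1\<^sub>m J"
    proof -
      have "T * S = (1 / det S) \<cdot>\<^sub>m (adj_mat S * S)"
        unfolding T_def by (rule mult_smult_assoc_mat[OF adj_mat(1)[OF Sc] Sc])
      also have "\<dots> = (1 / det S) \<cdot>\<^sub>m (det S \<cdot>\<^sub>m 1\<^sub>m J)" using adj_mat(3)[OF Sc] by simp
      also have "\<dots> = 1\<^sub>m J" using dS unfolding S_def[symmetric] by (intro eq_matI) auto
      finally show ?thesis .
    qed
    define K where "K = (\<Sum>j<J. \<Sum>i<J. (T $$ (j,i))\<^sup>2)"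
    have K0: "K \<ge> 0" unfolding K_def by (simp add: sum_nonneg)
    define b where "b = 1 / (real J * (K + 1))"
    have bpos: "b > 0" using J2 K0 by (simp add: b_def)
    define Lbar where "Lbar = Suc (\<Sum>i<J. ls i)"
    have lsL: "ls i < Lbar" if "i < J" for i
    proof -
      have "ls i \<le> (\<Sum>i<J. ls i)" by (rule member_le_sum) (use that in auto)
      then show ?thesis by (simp add: Lbar_def)
    qed
    have "\<forall>L0 \<ge> Lbar. sigma_sv J (O_mat f h J L0) \<ge> sqrt b"
    proof (intro allI impI)
      fix L0 assume L0: "L0 \<ge> Lbar"
      define A where "A = O_mat f h J L0"
      have Ac: "A \<in> carrier_mat L0 J" by (simp add: A_def O_mat_def)
      have ls: "\<forall>i<J. ls i < L0" using lsL L0 by (meson less_le_trans)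
      have AS: "mat J J (\<lambda>(i,j). A $$ (ls i, j)) = S"
        using ls by (intro eq_matI) (auto simp: A_def O_mat_def S_def Hm_def)
      have TS': "T * mat J J (\<lambda>(i,j). A $$ (ls i, j)) = 1\<^sub>m J" using TS AS by simp
      show "sigma_sv J (O_mat f h J L0) \<ge> sqrt b" unfolding A_def[symmetric]
      proof (rule sv_ge[OF Ac])
        show "J > 0" using J2 by simp
        fix z assume "eigenvalue (map_mat complex_of_real (transpose_mat A * A)) z"
        then obtain v where "eigenvector (map_mat complex_of_real (transpose_mat A * A)) v z"
          unfolding eigenvalue_def by blast
        from eig_bound[OF Ac Tc ls TS' this]
        show "z = of_real (Re z) \<and> Re z \<ge> b" unfolding b_def K_def by blast
      qed
    qed
    then show "\<exists>C>0. \<exists>Lbar::nat. \<forall>L0 \<ge> Lbar. sigma_sv J (O_mat f h J L0) \<ge> C"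
      using bpos by (intro exI[of _ "sqrt b"]) auto
  qed
  show ?thesis using hm hb main by blast
qed

end
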